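(* The exponential $f(u)$ of the general elliptic formal group law $F_\mu$ is a Hurwitz series over $E=\mathbb{Z}[\mu_1,\mu_2,\mu_3,\mu_4,\mu_6]$, i.e. $f(u)=\sum_{k\ge0}\varphi_k\frac{u^k}{k!}$ with all $\varphi_k\in E$.
   Context: Let $\mu_1,\mu_2,\mu_3,\mu_4,\mu_6$ be independent indeterminates, $E=\mathbb{Z}[\mu_1,\dots,\mu_6]$. On the cubic $Y^2Z+\mu_1XYZ+\mu_3YZ^2=X^3+\mu_2X^2Z+\mu_4XZ^2+\mu_6Z^3$ with chord-tangent group law (neutral element $O=(0:1:0)$, three collinear points sum to zero), use Tate coordinates $t=-X/Y$, $s=-Z/Y$: the curve is $s=t^3+\mu_1ts+\mu_2t^2s+\mu_3s^2+\mu_4ts^2+\mu_6s^3$ with $s(t)$ the power series solution with $s(0)=0$. The general elliptic formal group law $F_\mu(t_1,t_2)\in E[[t_1,t_2]]$ gives the $t$-coordinate of $P_1+P_2$ for $P_i=(t_i,s(t_i))$. Its exponential is the unique $f\in(E\otimes\mathbb{Q})[[u]]$ with $f(0)=0$, $f'(0)=1$, $f(u+v)=F_\mu(f(u),f(v))$. *)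

theory Defs
  imports "HOL-Computational_Algebra.Polynomial" "HOL-Computational_Algebra.Formal_Power_Series"
          "HOL-Computational_Algebra.Fraction_Field"
begin

text \<open>The coefficient ring E = Z[mu1,mu2,mu3,mu4,mu6], realised as an iterated
  univariate polynomial ring over int (five independent indeterminates).
  K is its fraction field; E tensor Q embeds into K.\<close>

type_synonym E = "int poly poly poly poly poly"
type_synonym K = "E fract"

definition mu1 :: E where "mu1 = [:0, 1:]"
definition mu2 :: E where "mu2 = [:[:0, 1:]:]"
definition mu3 :: E where "mu3 = [:[:[:0, 1:]:]:]"
definition mu4 :: E where "mu4 = [:[:[:[:0, 1:]:]:]:]"
definition mu6 :: E where "mu6 = [:[:[:[:[:0, 1:]:]:]:]:]"

abbreviation m1 :: K where "m1 \<equiv> Fract mu1 1"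
abbreviation m2 :: K where "m2 \<equiv> Fract mu2 1"
abbreviation m3 :: K where "m3 \<equiv> Fract mu3 1"
abbreviation m4 :: K where "m4 \<equiv> Fract mu4 1"
abbreviation m6 :: K where "m6 \<equiv> Fract mu6 1"

definition tate_s :: "K fps" where
  "tate_s = (THE s. fps_nth s 0 = 0 \<and>
     s = fps_X ^ 3 + fps_const m1 * fps_X * s + fps_const m2 * fps_X ^ 2 * s
         + fps_const m3 * s ^ 2 + fps_const m4 * fps_X * s ^ 2 + fps_const m6 * s ^ 3)"

text \<open>Power series in two variables t1, t2 are represented as elements of
  K fps fps: the outer variable is t2, the inner variable is t1, i.e. the
  coefficient of t1^i t2^j of G is fps_nth (fps_nth G j) i.\<close>

definition T1 :: "K fps fps" where "T1 = fps_const fps_X"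
definition T2 :: "K fps fps" where "T2 = fps_X"

text \<open>Chord through P1 = (t1, s(t1)) and P2 = (t2, s(t2)): s = lambda t + nu with
  lambda = (s(t2) - s(t1)) / (t2 - t1) = sum_n s_n sum_{i+j=n-1} t1^i t2^j,
  nu = s(t1) - lambda t1.\<close>

definition chord_lambda :: "K fps fps" where
  "chord_lambda = Abs_fps (\<lambda>j. Abs_fps (\<lambda>i. fps_nth tate_s (i + j + 1)))"

definition chord_nu :: "K fps fps" where
  "chord_nu = fps_const tate_s - chord_lambda * T1"

text \<open>Substituting s = lambda t + nu into the cubic gives
  c3 t^3 + c2 t^2 + ... = 0 whose roots are t1, t2, t3 (third intersection point P3).\<close>

definition chord_c3 :: "K fps fps" where
  "chord_c3 = 1 + fps_const (fps_const m2) * chord_lambda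
     + fps_const (fps_const m4) * chord_lambda ^ 2 + fps_const (fps_const m6) * chord_lambda ^ 3"

definition chord_c2 :: "K fps fps" where
  "chord_c2 = fps_const (fps_const m1) * chord_lambda + fps_const (fps_const m2) * chord_nu
     + fps_const (fps_const m3) * chord_lambda ^ 2
     + 2 * fps_const (fps_const m4) * chord_lambda * chord_nu
     + 3 * fps_const (fps_const m6) * chord_lambda ^ 2 * chord_nu"

definition third_t :: "K fps fps" where
  "third_t = - T1 - T2 - chord_c2 * inverse chord_c3"

definition third_s :: "K fps fps" where
  "third_s = chord_lambda * third_t + chord_nu"

text \<open>P1 + P2 = -P3. For a point with Tate coordinates (t,s), its negative
  (X:Y:Z) -> (X : -Y - mu1 X - mu3 Z : Z) has t-coordinate t / (mu1 t + mu3 s - 1).\<close>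

definition elliptic_fgl :: "K fps fps" where
  "elliptic_fgl = third_t * inverse (fps_const (fps_const m1) * third_t
                                     + fps_const (fps_const m3) * third_s - 1)"

text \<open>For univariate series g, h with zero constant term, the two-variable series
  G(g(u), h(v)) (inner variable u, outer variable v).\<close>

definition bisubst :: "K fps fps \<Rightarrow> K fps \<Rightarrow> K fps \<Rightarrow> K fps fps" where
  "bisubst G g h = Abs_fps (\<lambda>j. Abs_fps (\<lambda>i.
      \<Sum>a\<le>i. \<Sum>b\<le>j. fps_nth (fps_nth G b) a * fps_nth (g ^ a) i * fps_nth (h ^ b) j))"

text \<open>The two-variable series f(u+v) (inner variable u, outer variable v).\<close>

definition add_subst :: "K fps \<Rightarrow> K fps fps" where
  "add_subst f = Abs_fps (\<lambda>j. Abs_fps (\<lambda>i. of_nat ((i + j) choose i) * fps_nth f (i + j)))"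

definition elliptic_exp :: "K fps" where
  "elliptic_exp = (THE f. fps_nth f 0 = 0 \<and> fps_nth f 1 = 1 \<and>
                     add_subst f = bisubst elliptic_fgl f f)"

definition hurwitz_over_E :: "K fps \<Rightarrow> bool" where
  "hurwitz_over_E f \<longleftrightarrow> (\<forall>k. \<exists>phi :: E. fps_nth f k = Fract phi 1 / of_nat (fact k))"

end

theory Submission
  imports Defs
begin

unbundle fps_syntax


definition deriv_op :: "('a::comm_ring_1 \<Rightarrow> 'a) \<Rightarrow> bool" where
  "deriv_op D \<longleftrightarrow> (\<forall>x y. D (x + y) = D x + D y) \<and> (\<forall>x y. D (x * y) = x * D y + D x * y) \<and> D 1 = 0"

lemma deriv_opD:
  assumes "deriv_op D"
  shows D_add: "D (x + y) = D x + D y" and D_mult: "D (x * y) = x * D y + D x * y"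
    and D_one: "D 1 = 0"
  using assms by (auto simp: deriv_op_def)

lemma D_zero: assumes "deriv_op D" shows "D 0 = 0"
  using D_add[OF assms, of 0 0] by simp

lemma D_uminus: assumes "deriv_op D" shows "D (- x) = - D x"
  using D_add[OF assms, of x "-x"] D_zero[OF assms] by (simp add: eq_neg_iff_add_eq_0 add.commute)

lemma D_diff: assumes "deriv_op D" shows "D (x - y) = D x - D y"
  using D_add[OF assms, of x "-y"] D_uminus[OF assms, of y] by simp

lemma D_of_nat: assumes "deriv_op D" shows "D (of_nat k) = 0"
  by (induction k) (simp_all add: D_zero[OF assms] D_add[OF assms] D_one[OF assms])

lemma D_numeral: assumes "deriv_op D" shows "D (numeral k) = 0"
  using D_of_nat[OF assms, of "numeral k"] by simp

lemma D_sq: assumes "deriv_op D" shows "D (x ^ 2) = 2 * x * D x"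
  by (simp add: power2_eq_square D_mult[OF assms] algebra_simps)

lemma D_cube: assumes "deriv_op D" shows "D (x ^ 3) = 3 * x^2 * D x"
  by (simp add: power3_eq_cube power2_eq_square D_mult[OF assms] algebra_simps)

lemmas D_rules = D_add D_mult D_one D_zero D_uminus D_diff D_of_nat D_numeral D_sq D_cube

definition PhiE :: "'a::comm_ring_1 \<Rightarrow> 'a \<Rightarrow> 'a \<Rightarrow> 'a \<Rightarrow> 'a \<Rightarrow> 'a \<Rightarrow> 'a \<Rightarrow> 'a" where
  "PhiE a1 a2 a3 a4 a6 t s = s - t^3 - a1*t*s - a2*t^2*s - a3*s^2 - a4*t*s^2 - a6*s^3"
definition PE :: "'a::comm_ring_1 \<Rightarrow> 'a \<Rightarrow> 'a \<Rightarrow> 'a \<Rightarrow> 'a \<Rightarrow> 'a \<Rightarrow> 'a \<Rightarrow> 'a" where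
  "PE a1 a2 a3 a4 a6 t s = 1 - a1*t - a2*t^2 - 2*a3*s - 2*a4*t*s - 3*a6*s^2"
definition QE :: "'a::comm_ring_1 \<Rightarrow> 'a \<Rightarrow> 'a \<Rightarrow> 'a \<Rightarrow> 'a \<Rightarrow> 'a \<Rightarrow> 'a \<Rightarrow> 'a" where
  "QE a1 a2 a3 a4 a6 t s = 3*t^2 + a1*s + 2*a2*t*s + a4*s^2"

lemma D_Phi:
  assumes D: "deriv_op D" and c: "D a1 = 0" "D a2 = 0" "D a3 = 0" "D a4 = 0" "D a6 = 0"
  shows "D (PhiE a1 a2 a3 a4 a6 x y) = - QE a1 a2 a3 a4 a6 x y * D x + PE a1 a2 a3 a4 a6 x y * D y"
  unfolding PhiE_def PE_def QE_def
  by (simp add: D_rules[OF D] c algebra_simps)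

lemma abstract_main:
  fixes D :: "'a::idom \<Rightarrow> 'a"
  assumes D: "deriv_op D" and c: "D a1 = 0" "D a2 = 0" "D a3 = 0" "D a4 = 0" "D a6 = 0"
  and h1: "PhiE a1 a2 a3 a4 a6 t1 (l*t1+n) = 0"
  and h2: "PhiE a1 a2 a3 a4 a6 t2 (l*t2+n) = 0"
  and Dt1: "D t1 = PE a1 a2 a3 a4 a6 t1 (l*t1+n)"
  and Dt2: "D t2 = - PE a1 a2 a3 a4 a6 t2 (l*t2+n)"
  and P1: "PE a1 a2 a3 a4 a6 t1 (l*t1+n) \<noteq> 0"
  and P2: "PE a1 a2 a3 a4 a6 t2 (l*t2+n) \<noteq> 0"
  and ne: "t1 \<noteq> t2"
  and c3: "c3 = 1 + a2*l + a4*l^2 + a6*l^3"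
  and c2: "c2 = a1*l + a2*n + a3*l^2 + 2*a4*l*n + 3*a6*l^2*n"
  and ic3: "c3 * ic3 = 1"
  and t3: "t3 = -t1 - t2 - c2 * ic3"
  and s3: "s3 = l*t3 + n"
  and dd: "dd = a1*t3 + a3*s3 - 1"
  and idd: "dd * idd = 1"
  shows "D t3 = 0" "D s3 = 0" "D (t3 * idd) = 0"
proof -
  define P1v where "P1v = PE a1 a2 a3 a4 a6 t1 (l*t1+n)"
  define P2v where "P2v = PE a1 a2 a3 a4 a6 t2 (l*t2+n)"
  define Q1v where "Q1v = QE a1 a2 a3 a4 a6 t1 (l*t1+n)"
  define Q2v where "Q2v = QE a1 a2 a3 a4 a6 t2 (l*t2+n)"
  define c1 where "c1 = -l + a1*n + 2*a3*l*n + a4*n^2 + 3*a6*l*n^2"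
  define c0 where "c0 = -n + a3*n^2 + a6*n^3"
  define u where "u = -c3*(t1+t2) - c2"
  define M where "M = a2 + 2*a4*l + 3*a6*l^2"
  define B where "B = a1 + 2*a3*l + 2*a4*n + 6*a6*l*n"
  have hfac: "PhiE a1 a2 a3 a4 a6 t (l*t+n) = -(c3*t^3 + c2*t^2 + c1*t + c0)" for t
    unfolding PhiE_def c3 c2 c1_def c0_def by (simp add: algebra_simps power2_eq_square power3_eq_cube)
  have hp: "QE a1 a2 a3 a4 a6 t (l*t+n) - l * PE a1 a2 a3 a4 a6 t (l*t+n) = 3*c3*t^2 + 2*c2*t + c1" for t
    unfolding PE_def QE_def c3 c2 c1_def by (simp add: algebra_simps power2_eq_square power3_eq_cube)
  have Pdiff: "P1v - P2v = -(t1-t2)*(B + M*(t1+t2))"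
    unfolding P1v_def P2v_def PE_def B_def M_def by (simp add: algebra_simps power2_eq_square)
  have e1: "D l * t1 + D n = Q1v - l * P1v"
  proof -
    have "D (PhiE a1 a2 a3 a4 a6 t1 (l*t1+n)) = 0" using h1 D_zero[OF D] by simp
    hence "- Q1v * P1v + P1v * (D l * t1 + l * P1v + D n) = 0"
      using D_Phi[OF D c, of t1 "l*t1+n"] Dt1
      by (simp add: D_rules[OF D] P1v_def Q1v_def algebra_simps)
    hence "P1v * (D l * t1 + D n - (Q1v - l * P1v)) = 0" by (simp add: algebra_simps)
    thus ?thesis using P1 by (simp add: P1v_def)
  qed
  have e2: "D l * t2 + D n = l * P2v - Q2v"
  proof -
    have "D (PhiE a1 a2 a3 a4 a6 t2 (l*t2+n)) = 0" using h2 D_zero[OF D] by simp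
    hence "Q2v * P2v + P2v * (D l * t2 - l * P2v + D n) = 0"
      using D_Phi[OF D c, of t2 "l*t2+n"] Dt2
      by (simp add: D_rules[OF D] P2v_def Q2v_def algebra_simps)
    hence "P2v * (D l * t2 + D n - (l * P2v - Q2v)) = 0" by (simp add: algebra_simps)
    thus ?thesis using P2 by (simp add: P2v_def)
  qed
  have k0: "c3*(t1^2+t1*t2+t2^2) + c2*(t1+t2) + c1 = 0"
  proof -
    have "(t1 - t2) * (c3*(t1^2+t1*t2+t2^2) + c2*(t1+t2) + c1) =
      (c3*t1^3 + c2*t1^2 + c1*t1 + c0) - (c3*t2^3 + c2*t2^2 + c1*t2 + c0)"
      by (simp add: algebra_simps power2_eq_square power3_eq_cube)
    also have "\<dots> = 0"
    proof -
      have a: "c3*t1^3 + c2*t1^2 + c1*t1 + c0 = 0" using h1 hfac[of t1] by (metis add.inverse_neutral neg_0_equal_iff_equal)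
      have b: "c3*t2^3 + c2*t2^2 + c1*t2 + c0 = 0" using h2 hfac[of t2] by (metis add.inverse_neutral neg_0_equal_iff_equal)
      show ?thesis by (simp only: a b) simp
    qed
    finally show ?thesis using ne by simp
  qed
  have c1e: "c1 = c3*t1*t2 + u*(t1+t2)"
  proof -
    have "c1 - (c3*t1*t2 + u*(t1+t2)) = c3*(t1^2+t1*t2+t2^2) + c2*(t1+t2) + c1"
      unfolding u_def by (simp add: algebra_simps power2_eq_square)
    thus ?thesis using k0 by simp
  qed
  have f1: "Q1v - l*P1v = (t1-t2)*(c3*t1 - u)"
    using hp[of t1] unfolding Q1v_def P1v_def c1e u_def by (simp add: algebra_simps power2_eq_square)
  have f2: "l*P2v - Q2v = (t1-t2)*(c3*t2 - u)"
    using hp[of t2] unfolding Q2v_def P2v_def c1e u_def by (simp add: algebra_simps power2_eq_square)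
  have dl: "D l = c3*(t1-t2)"
  proof -
    have "(t1 - t2) * (D l - c3*(t1-t2)) = 0"
      using e1 e2 f1 f2 by algebra
    thus ?thesis using ne by simp
  qed
  have dn: "D n = -(t1-t2)*u"
    using e1 f1 dl by algebra
  have c3t3: "c3 * t3 = u"
    unfolding t3 u_def using ic3 by (simp add: algebra_simps)
  have Dc3: "D c3 = M * D l" unfolding c3 M_def by (simp add: D_rules[OF D] c algebra_simps)
  have Dc2: "D c2 = B * D l + M * D n" unfolding c2 M_def B_def
    by (simp add: D_rules[OF D] c algebra_simps)
  have Du: "D u = - D c3 * (t1+t2) - c3 * (P1v - P2v) - D c2"
    unfolding u_def by (simp add: D_rules[OF D] Dt1 Dt2 P1v_def P2v_def algebra_simps)
  have "c3 * D t3 = D u - D c3 * t3"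
    using arg_cong[OF c3t3, of D] by (simp add: D_rules[OF D] algebra_simps)
  also have "\<dots> = (t1-t2) * M * (u - c3*t3)"
    unfolding Du Dc3 Dc2 Pdiff dl dn by (simp add: algebra_simps)
  also have "\<dots> = 0" using c3t3 by simp
  finally have "c3 * D t3 = 0" .
  moreover have "c3 \<noteq> 0" using ic3 by auto
  ultimately show Dt3: "D t3 = 0" by simp
  have "D s3 = D l * t3 + D n" unfolding s3 by (simp add: D_rules[OF D] Dt3)
  also have "\<dots> = (t1-t2)*(c3*t3 - u)" unfolding dl dn by (simp add: algebra_simps)
  finally show Ds3: "D s3 = 0" using c3t3 by simp
  have Ddd: "D dd = 0" unfolding dd by (simp add: D_rules[OF D] c Dt3 Ds3)
  have "D (dd * idd) = 0" using idd D_one[OF D] by simp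
  hence "dd * D idd = 0" by (simp add: D_mult[OF D] Ddd)
  hence "D idd = 0" using idd by auto
  thus "D (t3 * idd) = 0" by (simp add: D_mult[OF D] Dt3)
qed



definition zb :: "nat \<Rightarrow> 'a::comm_ring_1 fps \<Rightarrow> bool" where
  "zb k f \<longleftrightarrow> (\<forall>i<k. f $ i = 0)"

lemma zb_mult: "zb k a \<Longrightarrow> zb l b \<Longrightarrow> zb (k + l) (a * b)"
  unfolding zb_def[of "k+l"] fps_mult_nth
proof (intro allI impI sum.neutral ballI)
  fix i j assume "zb k a" "zb l b" "i < k + l" "j \<in> {0..i}"
  show "a $ j * b $ (i - j) = 0"
  proof (cases "j < k")
    case True thus ?thesis using \<open>zb k a\<close> by (simp add: zb_def)
  next
    case False hence "i - j < l" using \<open>i < k + l\<close> \<open>j \<in> {0..i}\<close> by auto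
    thus ?thesis using \<open>zb l b\<close> by (simp add: zb_def)
  qed
qed

lemma zb_add: "zb k a \<Longrightarrow> zb k b \<Longrightarrow> zb k (a + b)" unfolding zb_def by simp
lemma zb_diff: "zb k a \<Longrightarrow> zb k b \<Longrightarrow> zb k (a - b)" unfolding zb_def by simp
lemma zb_mono: "zb k a \<Longrightarrow> l \<le> k \<Longrightarrow> zb l a" unfolding zb_def by simp
lemma zb_0: "zb 0 a" unfolding zb_def by simp
lemma zb_1: "zb 1 a \<longleftrightarrow> a $ 0 = 0" unfolding zb_def by simp
lemma zb_X: "zb 1 (fps_X :: 'a::comm_ring_1 fps)" unfolding zb_def by simp
lemma zb_const_mult: "zb k a \<Longrightarrow> zb k (fps_const c * a)" unfolding zb_def by simp
lemma zb_all: "(\<forall>k. zb k a) \<Longrightarrow> a = 0"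
  unfolding zb_def by (auto simp: fps_eq_iff)

definition Psi :: "K fps \<Rightarrow> K fps" where
  "Psi s = fps_X ^ 3 + fps_const m1 * fps_X * s + fps_const m2 * fps_X ^ 2 * s
         + fps_const m3 * s ^ 2 + fps_const m4 * fps_X * s ^ 2 + fps_const m6 * s ^ 3"

lemma Psi_0: "a $ 0 = 0 \<Longrightarrow> Psi a $ 0 = 0"
  by (simp add: Psi_def fps_mult_nth power2_eq_square power3_eq_cube)

lemma Psi_contr:
  assumes "zb k (a - b)" "a $ 0 = 0" "b $ 0 = 0"
  shows "zb (Suc k) (Psi a - Psi b)"
proof -
  have eq: "Psi a - Psi b = (a - b) * (fps_const m1 * fps_X + fps_const m2 * fps_X * fps_X
     + fps_const m3 * (a + b) + fps_const m4 * fps_X * (a + b) + fps_const m6 * (a*a + a*b + b*b))"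
    by (simp add: Psi_def algebra_simps power2_eq_square power3_eq_cube)
  have z1: "zb 1 (fps_const m1 * fps_X + fps_const m2 * fps_X * fps_X
     + fps_const m3 * (a + b) + fps_const m4 * fps_X * (a + b) + fps_const m6 * (a*a + a*b + b*b))"
    using assms(2,3) by (simp add: zb_def fps_mult_nth)
  show ?thesis unfolding eq using zb_mult[OF assms(1) z1] by simp
qed

primrec sseq :: "nat \<Rightarrow> K fps" where
  "sseq 0 = 0" | "sseq (Suc n) = Psi (sseq n)"

lemma sseq_0: "sseq n $ 0 = 0"
  by (induction n) (simp_all add: Psi_0)

lemma sseq_step: "zb n (sseq (Suc n) - sseq n)"
proof (induction n)
  case 0 show ?case by (simp add: zb_0)
next
  case (Suc n)
  show ?case using Psi_contr[OF Suc sseq_0 sseq_0] by simp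
qed

lemma sseq_stable: "zb n (sseq (n + m) - sseq n)"
proof (induction m)
  case 0 show ?case by (simp add: zb_def)
next
  case (Suc m)
  have "sseq (n + Suc m) - sseq n = (sseq (Suc (n+m)) - sseq (n+m)) + (sseq (n+m) - sseq n)" by simp
  moreover have "zb n (sseq (Suc (n+m)) - sseq (n+m))" using zb_mono[OF sseq_step] by auto
  ultimately show ?case using Suc zb_add by metis
qed

lemma sseq_coeff: "i < n \<Longrightarrow> n \<le> m \<Longrightarrow> sseq m $ i = sseq n $ i"
  using sseq_stable[of n "m - n"] unfolding zb_def by auto

definition sfix :: "K fps" where "sfix = Abs_fps (\<lambda>i. sseq (Suc i) $ i)"

lemma sfix_zb: "zb (Suc n) (sfix - sseq (Suc n))"
  unfolding zb_def
proof (intro allI impI)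
  fix i assume "i < Suc n"
  hence "sseq (Suc n) $ i = sseq (Suc i) $ i" by (intro sseq_coeff) auto
  thus "(sfix - sseq (Suc n)) $ i = 0" by (simp add: sfix_def)
qed

lemma sfix_0: "sfix $ 0 = 0" using sseq_0[of "Suc 0"] by (simp add: sfix_def del: sseq.simps)

lemma sfix_eq: "Psi sfix = sfix"
proof (rule fps_ext)
  fix n
  have "zb (Suc (Suc n)) (Psi sfix - Psi (sseq (Suc n)))"
    using Psi_contr[OF sfix_zb sfix_0 sseq_0] .
  hence a: "Psi sfix $ n = sseq (Suc (Suc n)) $ n" unfolding zb_def by simp
  have "sseq (Suc (Suc n)) $ n = sseq (Suc n) $ n" by (rule sseq_coeff) auto
  thus "Psi sfix $ n = sfix $ n" using a by (simp add: sfix_def)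
qed

lemma Psi_unique:
  assumes "a $ 0 = 0" "b $ 0 = 0" "Psi a = a" "Psi b = b"
  shows "a = b"
proof -
  have "zb k (a - b)" for k
  proof (induction k)
    case 0 show ?case by (rule zb_0)
  next
    case (Suc k) show ?case using Psi_contr[OF Suc assms(1,2)] assms(3,4) by simp
  qed
  thus ?thesis using zb_all[of "a - b"] by simp
qed

lemma tate_s_props: "tate_s $ 0 = 0" "Psi tate_s = tate_s"
proof -
  have ex: "\<exists>!s. fps_nth s 0 = 0 \<and> s = Psi s"
    using sfix_0 sfix_eq Psi_unique by metis
  have "fps_nth tate_s 0 = 0 \<and> tate_s = Psi tate_s"
    unfolding tate_s_def using theI'[OF ex[unfolded Psi_def]] by (simp add: Psi_def)
  thus "tate_s $ 0 = 0" "Psi tate_s = tate_s" by auto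
qed



type_synonym R = "K fps fps"

lemma fps_const_sum: "fps_const (sum f S) = (\<Sum>i\<in>S. fps_const (f i))"
  by (induction S rule: infinite_finite_induct) (simp_all flip: fps_const_add)

definition liftO :: "K fps \<Rightarrow> R" where "liftO g = Abs_fps (\<lambda>j. fps_const (g $ j))"

lemma liftO_nth[simp]: "liftO g $ j = fps_const (g $ j)" by (simp add: liftO_def)
lemma liftO_add[simp]: "liftO (a + b) = liftO a + liftO b" by (rule fps_ext) simp
lemma liftO_diff[simp]: "liftO (a - b) = liftO a - liftO b" by (rule fps_ext) simp
lemma liftO_uminus[simp]: "liftO (- a) = - liftO a" by (rule fps_ext) simp
lemma liftO_mult[simp]: "liftO (a * b) = liftO a * liftO b"
  by (rule fps_ext) (simp add: fps_mult_nth fps_const_sum[symmetric])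
lemma liftO_one[simp]: "liftO 1 = 1" by (rule fps_ext) simp
lemma liftO_zero[simp]: "liftO 0 = 0" by (rule fps_ext) simp
lemma liftO_const[simp]: "liftO (fps_const c) = fps_const (fps_const c)" by (rule fps_ext) simp
lemma liftO_X[simp]: "liftO fps_X = fps_X" by (rule fps_ext) simp
lemma liftO_power[simp]: "liftO (a ^ n) = liftO a ^ n" by (induction n) simp_all
lemma liftO_numeral[simp]: "liftO (numeral k) = numeral k"
  using liftO_const[of "numeral k"] by (simp only: fps_numeral_fps_const[symmetric])

abbreviation "S1 \<equiv> (fps_const tate_s :: R)"
abbreviation "S2 \<equiv> liftO tate_s"
abbreviation "cc c \<equiv> (fps_const (fps_const c) :: R)"

lemma PhiE_s: "PhiE (fps_const m1) (fps_const m2) (fps_const m3) (fps_const m4) (fps_const m6) fps_X tate_s = 0"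
  using tate_s_props(2) unfolding PhiE_def Psi_def by (simp add: algebra_simps)

lemma PhiE_S1: "PhiE (cc m1) (cc m2) (cc m3) (cc m4) (cc m6) T1 S1 = 0"
  unfolding PhiE_def T1_def using PhiE_s[unfolded PhiE_def] by simp

lemma PhiE_S2: "PhiE (cc m1) (cc m2) (cc m3) (cc m4) (cc m6) T2 S2 = 0"
proof -
  have "liftO (PhiE (fps_const m1) (fps_const m2) (fps_const m3) (fps_const m4) (fps_const m6) fps_X tate_s) = 0"
    by (simp add: PhiE_s)
  thus ?thesis unfolding PhiE_def T2_def by simp
qed

lemma tate_s_1: "tate_s $ 1 = 0"
proof -
  have "tate_s $ 1 = Psi tate_s $ 1" using tate_s_props(2) by simp
  also have "\<dots> = 0" using tate_s_props(1)
    by (simp add: Psi_def fps_mult_nth power2_eq_square power3_eq_cube numeral_3_eq_3)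
  finally show ?thesis .
qed

lemma lambda_rel: "chord_lambda * (T2 - T1) = S2 - S1"
proof (rule fps_ext)
  fix j
  show "(chord_lambda * (T2 - T1)) $ j = (S2 - S1) $ j"
  proof (cases j)
    case 0
    have "(chord_lambda * (T2 - T1)) $ 0 = - (chord_lambda $ 0 * fps_X)"
      by (simp add: T1_def T2_def algebra_simps)
    also have "\<dots> = - (tate_s - fps_const (tate_s $ 0))"
    proof -
      have "chord_lambda $ 0 * fps_X = tate_s - fps_const (tate_s $ 0)"
        by (rule fps_ext) (auto simp: chord_lambda_def)
      thus ?thesis by simp
    qed
    finally show ?thesis using 0 tate_s_props(1) by simp
  next
    case (Suc k)
    have "(chord_lambda * (T2 - T1)) $ Suc k = chord_lambda $ k - chord_lambda $ Suc k * fps_X"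
      by (simp add: T1_def T2_def algebra_simps)
    also have "\<dots> = fps_const (tate_s $ Suc k)"
      by (rule fps_ext) (auto simp: chord_lambda_def)
    finally show ?thesis using Suc by simp
  qed
qed

lemma deriv_op_fps_deriv: "deriv_op (fps_deriv :: 'a::comm_ring_1 fps \<Rightarrow> 'a fps)"
  unfolding deriv_op_def by simp

definition d1 :: "R \<Rightarrow> R" where "d1 G = Abs_fps (\<lambda>j. fps_deriv (G $ j))"
abbreviation d2 :: "R \<Rightarrow> R" where "d2 \<equiv> fps_deriv"

lemma d1_nth[simp]: "d1 G $ j = fps_deriv (G $ j)" by (simp add: d1_def)

lemma deriv_op_d1: "deriv_op d1"
  unfolding deriv_op_def
proof (intro conjI allI)
  fix x y :: R
  show "d1 (x + y) = d1 x + d1 y" by (rule fps_ext) simp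
  show "d1 (x * y) = x * d1 y + d1 x * y"
    by (rule fps_ext) (simp add: fps_mult_nth fps_deriv_sum sum.distrib)
  show "d1 1 = 0" by (rule fps_ext) (simp add: fps_one_nth)
qed

lemma d1_T1[simp]: "d1 T1 = 1" by (rule fps_ext) (simp add: T1_def fps_one_nth)
lemma d1_T2[simp]: "d1 T2 = 0" by (rule fps_ext) (simp add: T2_def fps_X_nth)
lemma d2_T1[simp]: "d2 T1 = 0" by (simp add: T1_def)
lemma d2_T2[simp]: "d2 T2 = 1" by (simp add: T2_def)
lemma d1_cc[simp]: "d1 (cc c) = 0" by (rule fps_ext) simp
lemma d1_S2[simp]: "d1 S2 = 0" by (rule fps_ext) simp
lemma d1_S1: "d1 S1 = fps_const (fps_deriv tate_s)" by (rule fps_ext) simp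
lemma d2_S1[simp]: "d2 S1 = 0" by simp

abbreviation "P1 \<equiv> PE (cc m1) (cc m2) (cc m3) (cc m4) (cc m6) T1 S1"
abbreviation "P2 \<equiv> PE (cc m1) (cc m2) (cc m3) (cc m4) (cc m6) T2 S2"

definition DD :: "R \<Rightarrow> R" where "DD G = P1 * d1 G - P2 * d2 G"

lemma deriv_op_DD: "deriv_op DD"
  using deriv_op_d1 deriv_op_fps_deriv[where 'a = "K fps"]
  unfolding deriv_op_def DD_def by (simp add: algebra_simps)

lemma R_inverse:
  fixes G :: R assumes "G $ 0 $ 0 \<noteq> 0"
  shows "G * inverse G = 1"
proof -
  have "G $ 0 * inverse (G $ 0) = 1" using assms by (rule inverse_mult_eq_1')
  thus ?thesis unfolding fps_inverse_def by (rule fps_right_inverse)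
qed

lemma nth00_mult[simp]: "((a :: R) * b) $ 0 $ 0 = a $ 0 $ 0 * b $ 0 $ 0" by simp
lemma nth00_power[simp]: "((a :: R) ^ k) $ 0 $ 0 = (a $ 0 $ 0) ^ k"
  by (induction k) (simp_all add: fps_one_nth)

lemma lam00[simp]: "chord_lambda $ 0 $ 0 = 0" using tate_s_1 by (simp add: chord_lambda_def)
lemma nu00[simp]: "chord_nu $ 0 $ 0 = 0" by (simp add: chord_nu_def T1_def tate_s_props(1))
lemma c3_00[simp]: "chord_c3 $ 0 $ 0 = 1" by (simp add: chord_c3_def)
lemma c2_00[simp]: "chord_c2 $ 0 $ 0 = 0" by (simp add: chord_c2_def)
lemma c3_inv: "chord_c3 * inverse chord_c3 = 1" by (rule R_inverse) simp
lemma t3_00[simp]: "third_t $ 0 $ 0 = 0" by (simp add: third_t_def T1_def T2_def)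
lemma s3_00[simp]: "third_s $ 0 $ 0 = 0" by (simp add: third_s_def)
lemma dd_inv: "(cc m1 * third_t + cc m3 * third_s - 1) * inverse (cc m1 * third_t + cc m3 * third_s - 1) = 1"
  by (rule R_inverse) simp

lemma main_identity: "DD elliptic_fgl = 0"
proof -
  have DDc: "DD (cc c) = 0" for c by (simp add: DD_def)
  have S1e: "chord_lambda * T1 + chord_nu = S1" by (simp add: chord_nu_def)
  have S2e: "chord_lambda * T2 + chord_nu = S2"
    using lambda_rel by (simp add: chord_nu_def algebra_simps)
  have Ps0: "PE (fps_const m1) (fps_const m2) (fps_const m3) (fps_const m4) (fps_const m6) fps_X tate_s $ 0 = 1"
    using tate_s_props(1) by (simp add: PE_def power2_eq_square)
  have s20: "(tate_s^2) $ 0 = 0" using tate_s_props(1) by (simp add: power2_eq_square)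
  have "P1 $ 0 $ 0 = 1" by (simp add: PE_def T1_def tate_s_props(1) s20)
  hence P1nz: "P1 \<noteq> 0" by auto
  have "P2 = liftO (PE (fps_const m1) (fps_const m2) (fps_const m3) (fps_const m4) (fps_const m6) fps_X tate_s)"
    by (simp add: PE_def T2_def)
  hence "P2 $ 0 $ 0 = 1" using Ps0 by simp
  hence P2nz: "P2 \<noteq> 0" by auto
  have ne: "T1 \<noteq> T2"
  proof
    assume "T1 = T2" hence "T1 $ 0 = T2 $ 0" by simp
    thus False by (simp add: T1_def T2_def fps_eq_iff) (metis fps_X_nth zero_neq_one)
  qed
  have DT1: "DD T1 = P1" by (simp add: DD_def)
  have DT2: "DD T2 = - P2" by (simp add: DD_def)
  show ?thesis
    unfolding elliptic_fgl_def
    using abstract_main(3)[where ?t1.0=T1 and l=chord_lambda and n=chord_nu and ?t2.0=T2,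
        OF deriv_op_DD DDc DDc DDc DDc DDc, unfolded S1e S2e,
        OF PhiE_S1 PhiE_S2 DT1 DT2 P1nz P2nz ne chord_c3_def chord_c2_def c3_inv third_t_def
        third_s_def refl dd_inv]
    by simp
qed

lemma abstract_F0:
  fixes x :: "'a::idom"
  assumes h: "PhiE a1 a2 a3 a4 a6 x (l*x) = 0" and x0: "x \<noteq> 0"
  and c3: "c3 = 1 + a2*l + a4*l^2 + a6*l^3"
  and c2: "c2 = a1*l + a2*0 + a3*l^2 + 2*a4*l*0 + 3*a6*l^2*0"
  and ic3: "c3 * ic3 = 1"
  and t3: "t3 = -x - 0 - c2 * ic3"
  and s3: "s3 = l*t3 + 0"
  and dd: "dd = a1*t3 + a3*s3 - 1"
  and idd: "dd * idd = 1"
  shows "t3 * idd = x"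
proof -
  define a where "a = a1 + a3*l"
  have "x * (l - x^2*c3 - x*a*l) = PhiE a1 a2 a3 a4 a6 x (l*x)"
    unfolding PhiE_def c3 a_def by (simp add: algebra_simps power2_eq_square power3_eq_cube)
  hence "l - x^2*c3 - x*a*l = 0" using h x0 by simp
  hence le: "l = x^2*c3 + x*a*l" by (simp add: algebra_simps)
  have "c3 * t3 = -x*c3 - c2*(c3*ic3)" unfolding t3 by (simp add: algebra_simps)
  hence c3t3: "c3 * t3 = -x*c3 - a*l" unfolding c2 a_def using ic3 by (simp add: algebra_simps power2_eq_square)
  have "c3 * (t3 * (1 - x*a) + x) = (c3*t3)*(1 - x*a) + x*c3" by (simp add: algebra_simps)
  also have "\<dots> = a*(x^2*c3 - l + x*a*l)" unfolding c3t3 by (simp add: algebra_simps power2_eq_square)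
  also have "\<dots> = 0" by (subst le) (simp add: algebra_simps)
  finally have "t3 * (1 - x*a) + x = 0" using ic3 by auto
  hence "t3 = x * dd" unfolding dd s3 a_def by (simp add: algebra_simps)
  thus ?thesis using idd by (simp add: mult.assoc)
qed

lemma nth0_power: "((a :: 'b::comm_ring_1 fps) ^ k) $ 0 = (a $ 0) ^ k"
  by (induction k) (simp_all add: fps_one_nth)

lemma F_t2_0: "elliptic_fgl $ 0 = fps_X"
proof -
  define l where "l = chord_lambda $ 0"
  have lX: "l * fps_X = tate_s"
    unfolding l_def by (rule fps_ext) (auto simp: chord_lambda_def tate_s_props(1))
  have h: "PhiE (fps_const m1) (fps_const m2) (fps_const m3) (fps_const m4) (fps_const m6) fps_X (l*fps_X) = 0"
    using PhiE_s lX by simp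
  have nu0: "chord_nu $ 0 = 0" using lX unfolding chord_nu_def l_def by (simp add: T1_def mult.commute)
  have c3e: "chord_c3 $ 0 = 1 + fps_const m2 * l + fps_const m4 * l^2 + fps_const m6 * l^3"
    by (simp add: chord_c3_def l_def nth0_power)
  have c2e: "chord_c2 $ 0 = fps_const m1 * l + fps_const m2 * 0 + fps_const m3 * l^2 + 2 * fps_const m4 * l * 0 + 3 * fps_const m6 * l^2 * 0"
    by (simp add: chord_c2_def l_def nth0_power nu0)
  have ic3: "chord_c3 $ 0 * inverse (chord_c3 $ 0) = 1"
    by (rule inverse_mult_eq_1') simp
  have t3e: "third_t $ 0 = - fps_X - 0 - chord_c2 $ 0 * inverse (chord_c3 $ 0)"
    by (simp add: third_t_def T1_def T2_def)
  have s3e: "third_s $ 0 = l * third_t $ 0 + 0" by (simp add: third_s_def l_def nu0)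
  define dd where "dd = cc m1 * third_t + cc m3 * third_s - 1"
  have dde: "dd $ 0 = fps_const m1 * third_t $ 0 + fps_const m3 * third_s $ 0 - 1"
    by (simp add: dd_def)
  have idd: "dd $ 0 * inverse (dd $ 0) = 1"
    by (rule inverse_mult_eq_1') (simp add: dd_def)
  have "elliptic_fgl $ 0 = third_t $ 0 * inverse (dd $ 0)"
    by (simp add: elliptic_fgl_def dd_def)
  also have "\<dots> = fps_X"
    by (rule abstract_F0[OF h _ c3e c2e ic3 t3e s3e dde idd]) simp
  finally show ?thesis .
qed



definition mapC :: "K fps \<Rightarrow> R \<Rightarrow> R" where "mapC f G = Abs_fps (\<lambda>b. G $ b oo f)"
definition Sub :: "K fps \<Rightarrow> R \<Rightarrow> R" where "Sub f G = mapC f G oo liftO f"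

lemma mapC_nth[simp]: "mapC f G $ b = G $ b oo f" by (simp add: mapC_def)

context fixes f :: "K fps" assumes f0: "f $ 0 = 0" begin

lemma mapC_add: "mapC f (G + H) = mapC f G + mapC f H"
  by (rule fps_ext) (simp add: fps_compose_add_distrib)
lemma mapC_mult: "mapC f (G * H) = mapC f G * mapC f H"
  by (rule fps_ext) (simp add: fps_mult_nth fps_compose_sum_distrib fps_compose_mult_distrib[OF f0])
lemma mapC_one: "mapC f 1 = 1"
  by (rule fps_ext) (simp add: fps_one_nth)
lemma mapC_const: "mapC f (fps_const c) = fps_const (c oo f)"
  by (rule fps_ext) simp
lemma mapC_X: "mapC f fps_X = fps_X"
  by (rule fps_ext) (simp add: fps_X_nth)
lemma mapC_liftO: "mapC f (liftO g) = liftO g"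
  by (rule fps_ext) simp

lemma liftO_f0: "liftO f $ 0 = 0" by (simp add: f0)

lemma Sub_add: "Sub f (G + H) = Sub f G + Sub f H"
  by (simp add: Sub_def mapC_add fps_compose_add_distrib)
lemma Sub_mult: "Sub f (G * H) = Sub f G * Sub f H"
  by (simp add: Sub_def mapC_mult fps_compose_mult_distrib[OF liftO_f0])
lemma Sub_one: "Sub f 1 = 1"
  by (simp add: Sub_def mapC_one)
lemma Sub_const: "Sub f (fps_const c) = fps_const (c oo f)"
  by (simp add: Sub_def mapC_const)
lemma Sub_T1: "Sub f T1 = fps_const f"
  by (simp add: T1_def Sub_const f0)
lemma Sub_T2: "Sub f T2 = liftO f"
  by (simp add: T2_def Sub_def mapC_X f0)
lemma Sub_cc: "Sub f (cc c) = cc c"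
  by (simp add: Sub_const)

lemma liftO_compose: "liftO g oo liftO f = liftO (g oo f)"
  by (rule fps_ext) (simp add: fps_compose_nth fps_const_sum flip: liftO_power)

lemma Sub_liftO: "Sub f (liftO g) = liftO (g oo f)"
  by (simp add: Sub_def mapC_liftO liftO_compose)

lemma Sub_nth0: "Sub f G $ 0 = G $ 0 oo f"
  by (simp add: Sub_def)

lemma fps_deriv_liftO: "fps_deriv (liftO g) = liftO (fps_deriv g)"
  by (rule fps_ext) (simp flip: fps_of_nat)

lemma fps_deriv_mapC: "fps_deriv (mapC f G) = mapC f (fps_deriv G)"
  by (rule fps_ext) (simp add: fps_const_mult_apply_left flip: fps_of_nat)

lemma d2_Sub: "d2 (Sub f G) = Sub f (d2 G) * liftO (fps_deriv f)"
  unfolding Sub_def by (simp add: fps_compose_deriv[OF liftO_f0] fps_deriv_mapC fps_deriv_liftO)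

lemma d1_compose_liftO: "d1 (A oo liftO f) = d1 A oo liftO f"
  by (rule fps_ext) (simp add: fps_compose_nth fps_deriv_sum flip: liftO_power)

lemma d1_mapC: "d1 (mapC f G) = mapC f (d1 G) * fps_const (fps_deriv f)"
  by (rule fps_ext) (simp add: fps_compose_deriv[OF f0])

lemma d1_Sub: "d1 (Sub f G) = Sub f (d1 G) * fps_const (fps_deriv f)"
  unfolding Sub_def d1_compose_liftO d1_mapC
  by (simp add: fps_compose_mult_distrib[OF liftO_f0])

lemma bisubst_Sub: "bisubst G f f = Sub f G"
proof (rule fps_ext)
  fix j
  show "bisubst G f f $ j = Sub f G $ j"
  proof (rule fps_ext)
    fix i
    have "Sub f G $ j $ i = (\<Sum>b=0..j. (G $ b oo f) $ i * (f ^ b) $ j)"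
      by (simp add: Sub_def fps_compose_nth fps_sum_nth flip: liftO_power)
    also have "\<dots> = (\<Sum>b=0..j. \<Sum>a=0..i. G $ b $ a * (f ^ a) $ i * (f ^ b) $ j)"
      by (simp add: fps_compose_nth sum_distrib_right)
    also have "\<dots> = (\<Sum>a\<le>i. \<Sum>b\<le>j. G $ b $ a * (f ^ a) $ i * (f ^ b) $ j)"
      by (subst sum.swap) (simp add: atLeast0AtMost)
    finally show "bisubst G f f $ j $ i = Sub f G $ j $ i"
      by (simp add: bisubst_def)
  qed
qed

end



lemma binom_aux: "(j+1) * ((i+j+1) choose i) = (i+1) * ((i+j+1) choose (i+1))"
proof -
  have a: "Suc j * (Suc (i+j) choose Suc j) = Suc (i+j) * ((i+j) choose j)" by (rule Suc_times_binomial)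
  have b: "Suc i * (Suc (i+j) choose Suc i) = Suc (i+j) * ((i+j) choose i)" by (rule Suc_times_binomial)
  have c: "(i+j) choose j = (i+j) choose i" using binomial_symmetric[of i "i+j"] by simp
  have d: "Suc (i+j) choose Suc j = Suc (i+j) choose i" using binomial_symmetric[of i "Suc (i+j)"] by simp
  show ?thesis using a b c d by simp
qed

lemma of_nat_mult_nth: "((of_nat n :: 'a::comm_ring_1 fps) * G) $ i = of_nat n * G $ i"
  by (simp flip: fps_of_nat)

lemma transport:
  fixes H :: R and f :: "K fps"
  assumes d: "d1 H = d2 H" and h0: "H $ 0 = f"
  shows "H = add_subst f"
proof -
  have "\<forall>i. H $ j $ i = of_nat ((i + j) choose i) * f $ (i + j)" for j
  proof (induction j)
    case 0 show ?case using h0 by simp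
  next
    case (Suc j)
    show ?case
    proof
      fix i
      have "d1 H $ j $ i = d2 H $ j $ i" using d by simp
      hence e: "of_nat (i+1) * H $ j $ (i+1) = of_nat (j+1) * H $ (j+1) $ i"
        by (simp add: of_nat_mult_nth del: of_nat_Suc of_nat_add)
      have "of_nat (j+1) * H $ Suc j $ i = of_nat (i+1) * (of_nat ((i+1+j) choose (i+1)) * f $ (i+1+j))"
        using e Suc[rule_format, of "i+1"] by simp
      also have "\<dots> = of_nat ((i+1) * ((i+j+1) choose (i+1))) * f $ (i+j+1)"
        by (simp add: algebra_simps)
      also have "\<dots> = of_nat (j+1) * (of_nat ((i+j+1) choose i) * f $ (i+j+1))"
        by (simp only: binom_aux[symmetric]) (simp add: algebra_simps)
      finally have "of_nat (j+1) * H $ Suc j $ i = of_nat (j+1) * (of_nat ((i+j+1) choose i) * f $ (i+j+1))" .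
      hence "H $ Suc j $ i = of_nat ((i+j+1) choose i) * f $ (i+j+1)"
        by (simp del: of_nat_Suc)
      thus "H $ Suc j $ i = of_nat ((i + Suc j) choose i) * f $ (i + Suc j)" by simp
    qed
  qed
  thus ?thesis by (intro fps_ext) (simp add: add_subst_def)
qed



abbreviation "kc c \<equiv> (fps_const c :: K fps)"
definition Pt :: "K fps" where "Pt = PE (kc m1) (kc m2) (kc m3) (kc m4) (kc m6) fps_X tate_s"
definition Qt :: "K fps" where "Qt = QE (kc m1) (kc m2) (kc m3) (kc m4) (kc m6) fps_X tate_s"

lemma Pt0: "Pt $ 0 = 1"
  using tate_s_props(1) by (simp add: Pt_def PE_def power2_eq_square)

lemma s_deriv: "fps_deriv tate_s * Pt = Qt"
proof -
  have "fps_deriv (PhiE (kc m1) (kc m2) (kc m3) (kc m4) (kc m6) fps_X tate_s) = 0"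
    by (simp only: PhiE_s) simp
  thus ?thesis using D_Phi[OF deriv_op_fps_deriv, of "kc m1" "kc m2" "kc m3" "kc m4" "kc m6" fps_X tate_s]
    by (simp add: Pt_def Qt_def algebra_simps)
qed

lemma one_minus_fps_const: "1 - fps_const (c::'a::comm_ring_1) = fps_const (1 - c)"
proof -
  have "1 - fps_const c = fps_const 1 - fps_const c" by (simp only: fps_const_1_eq_1)
  also have "\<dots> = fps_const (1 - c)" by (rule fps_const_sub)
  finally show ?thesis .
qed

lemma PE_compose:
  assumes "c $ 0 = 0"
  shows "PE (kc m1) (kc m2) (kc m3) (kc m4) (kc m6) x y oo c
       = PE (kc m1) (kc m2) (kc m3) (kc m4) (kc m6) (x oo c) (y oo c)"
  unfolding PE_def
  by (simp add: fps_compose_sub_distrib fps_compose_add_distrib fps_compose_mult_distrib[OF assms]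
      fps_compose_power[OF assms, symmetric] fps_numeral_fps_const)

lemma QE_compose:
  assumes "c $ 0 = 0"
  shows "QE (kc m1) (kc m2) (kc m3) (kc m4) (kc m6) x y oo c
       = QE (kc m1) (kc m2) (kc m3) (kc m4) (kc m6) (x oo c) (y oo c)"
  unfolding QE_def
  by (simp add: fps_compose_sub_distrib fps_compose_add_distrib fps_compose_mult_distrib[OF assms]
      fps_compose_power[OF assms, symmetric] fps_numeral_fps_const)

context fixes f :: "K fps" assumes f0: "f $ 0 = 0" begin

lemma Sub_diff: "Sub f (G - H) = Sub f G - Sub f H"
  using Sub_add[OF f0, of "G - H" H] by simp
lemma Sub_zero: "Sub f 0 = 0"
  using Sub_const[OF f0, of 0] by simp
lemma Sub_power: "Sub f (G ^ k) = Sub f G ^ k"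
  by (induction k) (simp_all add: Sub_one[OF f0] Sub_mult[OF f0])
lemma Sub_numeral: "Sub f (numeral k) = numeral k"
proof -
  have "Sub f (of_nat n) = of_nat n" for n
    by (induction n) (simp_all add: Sub_zero Sub_one[OF f0] Sub_add[OF f0] Sub_const[OF f0] flip: fps_of_nat)
  from this[of "numeral k"] show ?thesis by simp
qed

lemma Sub_PE: "Sub f (PE (cc m1) (cc m2) (cc m3) (cc m4) (cc m6) x y)
   = PE (cc m1) (cc m2) (cc m3) (cc m4) (cc m6) (Sub f x) (Sub f y)"
  unfolding PE_def
  by (simp add: Sub_diff Sub_add[OF f0] Sub_mult[OF f0] Sub_power Sub_numeral Sub_one[OF f0] Sub_cc[OF f0])

lemma Sub_P1: "Sub f P1 = fps_const (Pt oo f)"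
  unfolding Sub_PE Sub_T1[OF f0] Sub_const[OF f0] PE_compose[OF f0] Pt_def
  by (simp add: PE_def fps_X_fps_compose_startby0[OF f0] fps_numeral_fps_const one_minus_fps_const)

lemma Sub_P2: "Sub f P2 = liftO (Pt oo f)"
  unfolding Sub_PE Sub_T2[OF f0] Sub_liftO[OF f0] PE_compose[OF f0] Pt_def
  by (simp add: PE_def fps_X_fps_compose_startby0[OF f0])

end

lemma P1_eq: "P1 = fps_const Pt"
  unfolding Pt_def PE_def T1_def by (simp add: fps_numeral_fps_const one_minus_fps_const)
lemma P2_eq: "P2 = liftO Pt"
  unfolding Pt_def PE_def T2_def by simp

lemma main_id2: "P1 * d1 elliptic_fgl = P2 * d2 elliptic_fgl"
  using main_identity by (simp add: DD_def)

lemma F1: "elliptic_fgl $ Suc 0 = Pt"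
proof -
  have "(P1 * d1 elliptic_fgl) $ 0 = (P2 * d2 elliptic_fgl) $ 0" using main_id2 by simp
  thus ?thesis by (simp add: P1_eq P2_eq F_t2_0 Pt0)
qed

definition glog :: "K fps" where "glog = fps_integral0 (inverse Pt)"
definition fexp :: "K fps" where "fexp = fps_inv glog"

lemma glog0: "glog $ 0 = 0" and glog1: "glog $ 1 = 1"
  by (simp_all add: glog_def Pt0 fps_integral_def)

lemma fexp0: "fexp $ 0 = 0" by (simp add: fexp_def fps_inv_def)

lemma fexp_deriv: "fps_deriv fexp = Pt oo fexp"
proof -
  have "fps_deriv fexp = inverse (fps_deriv glog oo fexp)"
    unfolding fexp_def by (rule fps_inv_deriv) (use glog0 glog1 in simp_all)
  also have "fps_deriv glog = inverse Pt" by (simp add: glog_def fps_deriv_fps_integral)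
  also have "inverse (inverse Pt oo fexp) = Pt oo fexp"
    by (simp add: fps_inverse_compose[OF fexp0] Pt0)
  finally show ?thesis .
qed

lemma fexp1: "fexp $ 1 = 1"
proof -
  have "fps_deriv fexp $ 0 = (Pt oo fexp) $ 0" using fexp_deriv by simp
  thus ?thesis by (simp add: Pt0)
qed

lemma exp_solution: "add_subst f = bisubst elliptic_fgl f f"
  if f0: "f $ 0 = 0" and fd: "fps_deriv f = Pt oo f" for f
proof -
  define H where "H = Sub f elliptic_fgl"
  have "d1 H = Sub f (d1 elliptic_fgl) * Sub f P1"
    unfolding H_def d1_Sub[OF f0] Sub_P1[OF f0] fd ..
  also have "\<dots> = Sub f (P1 * d1 elliptic_fgl)" by (simp add: Sub_mult[OF f0] mult.commute)
  also have "\<dots> = Sub f (P2 * d2 elliptic_fgl)" using main_id2 by simp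
  also have "\<dots> = Sub f (d2 elliptic_fgl) * Sub f P2" by (simp add: Sub_mult[OF f0] mult.commute)
  also have "\<dots> = d2 H"
    unfolding H_def d2_Sub[OF f0] Sub_P2[OF f0] fd ..
  finally have d: "d1 H = d2 H" .
  have "H $ 0 = f" unfolding H_def Sub_nth0[OF f0] F_t2_0 by (simp add: f0)
  from transport[OF d this] show ?thesis by (simp add: H_def bisubst_Sub[OF f0])
qed

lemma exp_unique:
  assumes f0: "f $ 0 = 0" and f1: "f $ 1 = 1" and eq: "add_subst f = bisubst elliptic_fgl f f"
  shows "f = fexp"
proof -
  have "d2 (add_subst f) $ 0 = d2 (Sub f elliptic_fgl) $ 0"
    using eq bisubst_Sub[OF f0] by simp
  hence fd: "fps_deriv f = Pt oo f"
    unfolding d2_Sub[OF f0]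
    using f1 by (simp add: add_subst_def Sub_nth0[OF f0] F1 fps_eq_iff)
  have "fps_deriv (glog oo f) = (inverse Pt oo f) * (Pt oo f)"
    by (simp add: fps_compose_deriv[OF f0] glog_def fps_deriv_fps_integral fd)
  also have "\<dots> = (inverse Pt * Pt) oo f" by (simp add: fps_compose_mult_distrib[OF f0])
  also have "inverse Pt * Pt = 1" by (rule inverse_mult_eq_1) (simp add: Pt0)
  finally have "fps_deriv (glog oo f) = fps_deriv fps_X" by simp
  hence gf: "glog oo f = fps_X"
    unfolding fps_deriv_eq_iff by (simp add: glog0)
  have "f = fps_X oo f" by (simp add: f0)
  also have "\<dots> = (fexp oo glog) oo f" unfolding fexp_def using fps_inv[of glog] glog0 glog1 by simp
  also have "\<dots> = fexp oo (glog oo f)" by (simp add: fps_compose_assoc[OF f0 glog0])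
  also have "\<dots> = fexp" by (simp add: gf)
  finally show ?thesis .
qed

lemma elliptic_exp_eq: "elliptic_exp = fexp"
proof -
  have ex: "\<exists>!f. fps_nth f 0 = 0 \<and> fps_nth f 1 = 1 \<and> add_subst f = bisubst elliptic_fgl f f"
    using fexp0 fexp1 exp_solution[OF fexp0 fexp_deriv] exp_unique by blast
  show ?thesis unfolding elliptic_exp_def using theI'[OF ex] exp_unique by blast
qed



definition inE :: "K \<Rightarrow> bool" where "inE x \<longleftrightarrow> (\<exists>e. x = Fract e 1)"

lemma inE_add: "inE x \<Longrightarrow> inE y \<Longrightarrow> inE (x + y)" unfolding inE_def by auto
lemma inE_mult: "inE x \<Longrightarrow> inE y \<Longrightarrow> inE (x * y)" unfolding inE_def by auto
lemma inE_uminus: "inE x \<Longrightarrow> inE (- x)" unfolding inE_def by auto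
lemma inE_diff: "inE x \<Longrightarrow> inE y \<Longrightarrow> inE (x - y)" unfolding inE_def by auto
lemma inE_0: "inE 0" unfolding inE_def by (auto simp: Zero_fract_def)
lemma inE_1: "inE 1" unfolding inE_def by (auto simp: One_fract_def)
lemma inE_of_nat: "inE (of_nat n)" unfolding inE_def by (auto simp: of_nat_fract)
lemma inE_sum: "(\<And>i. i \<in> S \<Longrightarrow> inE (f i)) \<Longrightarrow> inE (sum f S)"
  by (induction S rule: infinite_finite_induct) (auto intro: inE_add inE_0)
lemma inE_Fract: "inE (Fract e 1)" unfolding inE_def by auto
lemma inE_numeral: "inE (numeral k)" using inE_of_nat[of "numeral k"] by simp

definition hz :: "nat \<Rightarrow> K fps \<Rightarrow> bool" where
  "hz n h \<longleftrightarrow> (\<forall>k\<le>n. inE (h $ k * of_nat (fact k)))"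

lemma hz_add: "hz n a \<Longrightarrow> hz n b \<Longrightarrow> hz n (a + b)"
  unfolding hz_def by (auto simp: distrib_right intro: inE_add)
lemma hz_diff: "hz n a \<Longrightarrow> hz n b \<Longrightarrow> hz n (a - b)"
  unfolding hz_def by (auto simp: left_diff_distrib intro: inE_diff)
lemma hz_mult: assumes "hz n a" "hz n b" shows "hz n (a * b)"
  unfolding hz_def
proof (intro allI impI)
  fix k assume k: "k \<le> n"
  have "(a * b) $ k * of_nat (fact k) =
    (\<Sum>i=0..k. of_nat (k choose i) * (a $ i * of_nat (fact i)) * (b $ (k - i) * of_nat (fact (k - i))))"
    unfolding fps_mult_nth sum_distrib_right
  proof (rule sum.cong[OF refl])
    fix i assume "i \<in> {0..k}"
    hence "fact k = fact i * fact (k - i) * (k choose i)" using binomial_fact_lemma[of i k] by simp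
    hence "(of_nat (fact k) :: K) = of_nat (fact i) * of_nat (fact (k - i)) * of_nat (k choose i)"
      by (metis of_nat_mult)
    thus "a $ i * b $ (k - i) * of_nat (fact k) =
      of_nat (k choose i) * (a $ i * of_nat (fact i)) * (b $ (k - i) * of_nat (fact (k - i)))"
      by (simp add: algebra_simps)
  qed
  also have "inE \<dots>"
  proof (rule inE_sum)
    fix i assume i: "i \<in> {0..k}"
    have "inE (a $ i * of_nat (fact i))" using assms(1) i k by (simp add: hz_def)
    moreover have "inE (b $ (k - i) * of_nat (fact (k - i)))" using assms(2) i k by (simp add: hz_def)
    ultimately show "inE (of_nat (k choose i) * (a $ i * of_nat (fact i)) * (b $ (k - i) * of_nat (fact (k - i))))"
      by (rule inE_mult[OF inE_mult[OF inE_of_nat]])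
  qed
  finally show "inE ((a * b) $ k * of_nat (fact k))" .
qed
lemma hz_power: "hz n a \<Longrightarrow> hz n (a ^ k)"
proof (induction k)
  case 0 show ?case unfolding hz_def by (auto simp: fps_one_nth intro: inE_0 inE_1)
next
  case (Suc k) thus ?case by (simp add: hz_mult)
qed
lemma hz_const: "inE c \<Longrightarrow> hz n (fps_const c)"
  unfolding hz_def by (auto intro: inE_0)
lemma hz_numeral: "hz n (numeral k)"
  using hz_const[OF inE_numeral, of n k] by (simp add: fps_numeral_fps_const)
lemma hz_one: "hz n 1"
  using hz_const[OF inE_1, of n] by simp
lemma hz_m: "hz n (kc (Fract e 1))" by (rule hz_const) (rule inE_Fract)

lemma hz_PE: "hz n x \<Longrightarrow> hz n y \<Longrightarrow> hz n (PE (kc m1) (kc m2) (kc m3) (kc m4) (kc m6) x y)"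
  unfolding PE_def by (intro hz_diff hz_add hz_mult hz_power hz_one hz_numeral hz_m)
lemma hz_QE: "hz n x \<Longrightarrow> hz n y \<Longrightarrow> hz n (QE (kc m1) (kc m2) (kc m3) (kc m4) (kc m6) x y)"
  unfolding QE_def by (intro hz_diff hz_add hz_mult hz_power hz_one hz_numeral hz_m)

definition sig :: "K fps" where "sig = tate_s oo fexp"

lemma fexp_deriv': "fps_deriv fexp = PE (kc m1) (kc m2) (kc m3) (kc m4) (kc m6) fexp sig"
  unfolding fexp_deriv Pt_def PE_compose[OF fexp0] sig_def
  by (simp add: fexp0)

lemma sig_deriv: "fps_deriv sig = QE (kc m1) (kc m2) (kc m3) (kc m4) (kc m6) fexp sig"
proof -
  have "fps_deriv sig = (fps_deriv tate_s oo fexp) * (Pt oo fexp)"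
    unfolding sig_def fps_compose_deriv[OF fexp0] fexp_deriv ..
  also have "\<dots> = Qt oo fexp" by (simp add: fps_compose_mult_distrib[OF fexp0, symmetric] s_deriv)
  also have "\<dots> = QE (kc m1) (kc m2) (kc m3) (kc m4) (kc m6) fexp sig"
    unfolding Qt_def QE_compose[OF fexp0] sig_def by (simp add: fexp0)
  finally show ?thesis .
qed

lemma hz_step:
  assumes "hz n h" and d: "fps_deriv h = g" and "hz n g"
  shows "hz (Suc n) h"
  unfolding hz_def
proof (intro allI impI)
  fix k assume "k \<le> Suc n"
  then consider "k \<le> n" | "k = Suc n" by linarith
  thus "inE (h $ k * of_nat (fact k))"
  proof cases
    case 1 thus ?thesis using assms(1) by (simp add: hz_def)
  next
    case 2
    have "h $ Suc n * of_nat (fact (Suc n)) = (fps_deriv h $ n) * of_nat (fact n)"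
      by (simp add: algebra_simps)
    also have "\<dots> = g $ n * of_nat (fact n)" using d by simp
    finally show ?thesis using assms(3) 2 by (simp add: hz_def)
  qed
qed

lemma hz_all: "hz n fexp \<and> hz n sig"
proof (induction n)
  case 0
  have "sig $ 0 = 0" by (simp add: sig_def tate_s_props(1))
  thus ?case by (simp add: hz_def fexp0 inE_0)
next
  case (Suc n)
  hence a: "hz n fexp" "hz n sig" by auto
  show ?case
    using hz_step[OF a(1) fexp_deriv' hz_PE[OF a]] hz_step[OF a(2) sig_deriv hz_QE[OF a]] by simp
qed

theorem mainTheorem5:
  shows "hurwitz_over_E elliptic_exp"
  unfolding hurwitz_over_E_def elliptic_exp_eq
proof
  fix k
  have "inE (fexp $ k * of_nat (fact k))" using hz_all[of k] by (simp add: hz_def)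
  then obtain e where e: "fexp $ k * of_nat (fact k) = Fract e 1" by (auto simp: inE_def)
  have "(of_nat (fact k) :: K) \<noteq> 0" by simp
  hence "fexp $ k = Fract e 1 / of_nat (fact k)" using e by (simp add: field_simps)
  thus "\<exists>phi :: E. fexp $ k = Fract phi 1 / of_nat (fact k)" by blast
qed


end
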